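(* Let $d\ge 2$ and $\ell\ge 3$. The cyclic Kautz digraph $CK(d,\ell)$ is isomorphic to the line digraph of the subKautz digraph $sK(d,\ell-1)$, that is, $CK(d,\ell)\cong L(sK(d,\ell-1))$, via the map sending the arc $(x_1x_2\ldots x_{\ell-1},\,x_2\ldots x_{\ell-1}x_\ell)$ of $sK(d,\ell-1)$ to the vertex $x_1x_2\ldots x_\ell$ of $CK(d,\ell)$.
   Context: All words are over the alphabet $\mathbb Z_{d+1}=\{0,1,\ldots,d\}$. The subKautz digraph $sK(d,\ell)$ ($d,\ell\ge 2$) has vertex set $\{x_1x_2\ldots x_\ell : x_i\neq x_{i+1},\ i=1,\ldots,\ell-1\}$ and arcs $x_1x_2\ldots x_\ell\to x_2\ldots x_\ell x_{\ell+1}$ for every $x_{\ell+1}\in\mathbb Z_{d+1}$ with $x_{\ell+1}\neq x_1$ and $x_{\ell+1}\neq x_\ell$. The cyclic Kautz digraph $CK(d,\ell)$ has vertex set $\{x_1\ldots x_\ell : x_i\neq x_{i+1}\ (i=1,\ldots,\ell-1),\ x_\ell\neq x_1\}$ and arcs $x_1x_2\ldots x_\ell\to x_2\ldots x_\ell y$ for every $y\in\mathbb Z_{d+1}$ with $y\neq x_2$ and $y\neq x_\ell$. The line digraph $L(G)$ of a digraph $G$ has as vertices the arcs of $G$, with $(u,v)$ adjacent to $(w,z)$ in $L(G)$ iff $v=w$. *)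

theory Defs
  imports Main
begin

text \<open>Words over Z_{d+1} = {0..d} are lists of naturals with entries at most d.
A digraph is a pair (vertex set, arc set), arcs being ordered pairs of vertices.\<close>

type_synonym 'a digraph = "'a set \<times> ('a \<times> 'a) set"

definition word :: "nat \<Rightarrow> nat \<Rightarrow> nat list \<Rightarrow> bool" where
  "word d l xs \<longleftrightarrow> length xs = l \<and> (\<forall>i<l. xs ! i \<le> d)
      \<and> (\<forall>i. i + 1 < l \<longrightarrow> xs ! i \<noteq> xs ! (i + 1))"

definition subKautz :: "nat \<Rightarrow> nat \<Rightarrow> nat list digraph" where
  "subKautz d l =
    ({xs. word d l xs},
     {(xs, ys). word d l xs \<and> (\<exists>y. y \<le> d \<and> y \<noteq> xs ! 0 \<and> y \<noteq> xs ! (l - 1)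
                                   \<and> ys = tl xs @ [y])})"

definition cycKautz :: "nat \<Rightarrow> nat \<Rightarrow> nat list digraph" where
  "cycKautz d l =
    ({xs. word d l xs \<and> xs ! (l - 1) \<noteq> xs ! 0},
     {(xs, ys). word d l xs \<and> xs ! (l - 1) \<noteq> xs ! 0
        \<and> (\<exists>y. y \<le> d \<and> y \<noteq> xs ! 1 \<and> y \<noteq> xs ! (l - 1) \<and> ys = tl xs @ [y])})"

definition line_digraph :: "'a digraph \<Rightarrow> ('a \<times> 'a) digraph" where
  "line_digraph G = (snd G, {(a, b). a \<in> snd G \<and> b \<in> snd G \<and> snd a = fst b})"

definition digraph_iso :: "('a \<Rightarrow> 'b) \<Rightarrow> 'a digraph \<Rightarrow> 'b digraph \<Rightarrow> bool" where
  "digraph_iso f G H \<longleftrightarrow> bij_betw f (fst G) (fst H)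
     \<and> (\<forall>u\<in>fst G. \<forall>v\<in>fst G. (u, v) \<in> snd G \<longleftrightarrow> (f u, f v) \<in> snd H)"

definition arc_to_word :: "nat list \<times> nat list \<Rightarrow> nat list" where
  "arc_to_word a = fst a @ [last (snd a)]"

end

theory Submission
  imports Defs
begin

lemma word_snoc:
  assumes "m > 0"
  shows "word d (Suc m) (xs @ [y]) \<longleftrightarrow> word d m xs \<and> y \<le> d \<and> y \<noteq> xs ! (m - 1)"
proof
  assume w: "word d (Suc m) (xs @ [y])"
  hence len: "length xs = m" by (simp add: word_def)
  have a: "\<forall>i<Suc m. (xs@[y]) ! i \<le> d" and b: "\<forall>i. i + 1 < Suc m \<longrightarrow> (xs@[y]) ! i \<noteq> (xs@[y]) ! (i + 1)"
    using w by (auto simp: word_def)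
  have "word d m xs"
    unfolding word_def
  proof (intro conjI allI impI)
    show "length xs = m" by fact
    fix i assume "i < m" thus "xs ! i \<le> d" using a[rule_format, of i] len by (simp add: nth_append)
  next
    fix i assume "i + 1 < m" thus "xs ! i \<noteq> xs ! (i+1)" using b[rule_format, of i] len by (simp add: nth_append)
  qed
  moreover have "y \<le> d" using a[rule_format, of m] len by (simp add: nth_append)
  moreover have "y \<noteq> xs ! (m - 1)" using b[rule_format, of "m-1"] len assms by (simp add: nth_append)
  ultimately show "word d m xs \<and> y \<le> d \<and> y \<noteq> xs ! (m - 1)" by blast
next
  assume h: "word d m xs \<and> y \<le> d \<and> y \<noteq> xs ! (m - 1)"
  hence len: "length xs = m" by (simp add: word_def)
  show "word d (Suc m) (xs @ [y])"
    unfolding word_def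
  proof (intro conjI allI impI)
    show "length (xs @ [y]) = Suc m" using len by simp
    fix i assume "i < Suc m" thus "(xs@[y]) ! i \<le> d" using h len
      by (cases "i < m") (auto simp: nth_append word_def)
  next
    fix i assume i: "i + 1 < Suc m"
    show "(xs@[y]) ! i \<noteq> (xs@[y]) ! (i+1)"
    proof (cases "i + 1 < m")
      case True thus ?thesis using h len by (auto simp: nth_append word_def)
    next
      case False hence "i = m - 1" using i by simp
      thus ?thesis using h len assms by (simp add: nth_append)
    qed
  qed
qed

lemma arcs_sK:
  "a \<in> snd (subKautz d m) \<longleftrightarrow> (\<exists>xs y. a = (xs, tl xs @ [y]) \<and> word d m xs \<and> y \<le> d \<and> y \<noteq> xs ! 0 \<and> y \<noteq> xs ! (m - 1))"
  unfolding subKautz_def by auto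

theorem mainTheorem1:
  fixes d l :: nat
  assumes "d \<ge> 2" and "l \<ge> 3"
  shows "digraph_iso arc_to_word (line_digraph (subKautz d (l - 1))) (cycKautz d l)"
proof -
  define m where "m = l - 1"
  have m: "m \<ge> 2" "l = Suc m" using assms(2) unfolding m_def by auto
  have atw: "arc_to_word (xs, tl xs @ [y]) = xs @ [y]" for xs y by (simp add: arc_to_word_def)
  have cyc: "xs @ [y] \<in> fst (cycKautz d l) \<longleftrightarrow> word d m xs \<and> y \<le> d \<and> y \<noteq> xs ! 0 \<and> y \<noteq> xs ! (m - 1)"
    if "length xs = m" for xs y
    using that m word_snoc[of m d xs y] by (auto simp: cycKautz_def nth_append)
  have inj: "inj_on arc_to_word (snd (subKautz d m))"
  proof (rule inj_onI)
    fix a b assume "a \<in> snd (subKautz d m)" "b \<in> snd (subKautz d m)" "arc_to_word a = arc_to_word b"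
    then obtain xs y xs' y' where "a = (xs, tl xs @ [y])" "b = (xs', tl xs' @ [y'])"
       "xs @ [y] = xs' @ [y']" by (auto simp: arcs_sK atw)
    thus "a = b" by simp
  qed
  have img: "arc_to_word ` snd (subKautz d m) = fst (cycKautz d l)"
  proof
    show "arc_to_word ` snd (subKautz d m) \<subseteq> fst (cycKautz d l)"
    proof
      fix z assume "z \<in> arc_to_word ` snd (subKautz d m)"
      then obtain xs y where "z = xs @ [y]" "word d m xs" "y \<le> d" "y \<noteq> xs ! 0" "y \<noteq> xs ! (m - 1)"
        by (auto simp: arcs_sK atw)
      thus "z \<in> fst (cycKautz d l)" using cyc[of xs y] by (simp add: word_def)
    qed
  next
    show "fst (cycKautz d l) \<subseteq> arc_to_word ` snd (subKautz d m)"
    proof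
      fix z assume z: "z \<in> fst (cycKautz d l)"
      hence "length z = Suc m" using m by (simp add: cycKautz_def word_def)
      then obtain xs y where zz: "z = xs @ [y]" and len: "length xs = m"
        by (metis append_butlast_last_id length_butlast diff_Suc_1 list.size(3) nat.distinct(1))
      have "(xs, tl xs @ [y]) \<in> snd (subKautz d m)" using cyc[OF len] z zz by (auto simp: arcs_sK)
      thus "z \<in> arc_to_word ` snd (subKautz d m)" using zz atw by (metis image_eqI)
    qed
  qed
  have arcs: "(a, b) \<in> snd (line_digraph (subKautz d m)) \<longleftrightarrow> (arc_to_word a, arc_to_word b) \<in> snd (cycKautz d l)"
    if a: "a \<in> snd (subKautz d m)" and b: "b \<in> snd (subKautz d m)" for a b
  proof -
    obtain xs y where A: "a = (xs, tl xs @ [y])" "word d m xs" "y \<le> d" "y \<noteq> xs ! 0" "y \<noteq> xs ! (m - 1)"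
      using a by (auto simp: arcs_sK)
    obtain xs' y' where B: "b = (xs', tl xs' @ [y'])" "word d m xs'" "y' \<le> d" "y' \<noteq> xs' ! 0" "y' \<noteq> xs' ! (m - 1)"
      using b by (auto simp: arcs_sK)
    have lx: "length xs = m" "length xs' = m" using A B by (auto simp: word_def)
    have ina: "xs @ [y] \<in> fst (cycKautz d l)" using cyc[OF lx(1)] A by simp
    have ina': "word d l (xs @ [y]) \<and> (xs @ [y]) ! (l - 1) \<noteq> (xs @ [y]) ! 0"
      using ina by (simp add: cycKautz_def)
    have x1: "(xs @ [y]) ! 1 = xs ! 1" using lx m by (simp add: nth_append)
    have tlx: "tl (xs @ [y]) = tl xs @ [y]" using lx m by (cases xs) auto
    have lastl: "(xs @ [y]) ! (l - 1) = y" using lx m by (simp add: nth_append)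
    show ?thesis
    proof
      assume "(a, b) \<in> snd (line_digraph (subKautz d m))"
      hence e: "xs' = tl xs @ [y]" using A B by (simp add: line_digraph_def)
      have "y' \<noteq> xs ! 1" using B(4) e lx m by (cases xs) (auto simp: nth_append split: if_splits)
      moreover have "y' \<noteq> y" using B(5) e lx m by (simp add: nth_append)
      ultimately show "(arc_to_word a, arc_to_word b) \<in> snd (cycKautz d l)"
        using ina' A B e x1 tlx lastl by (auto simp: cycKautz_def atw)
    next
      assume "(arc_to_word a, arc_to_word b) \<in> snd (cycKautz d l)"
      hence "\<exists>z. xs' @ [y'] = tl xs @ [y] @ [z]" using A B tlx by (auto simp: cycKautz_def atw)
      hence e: "xs' = tl xs @ [y]" by auto
      thus "(a, b) \<in> snd (line_digraph (subKautz d m))" using a b A B by (simp add: line_digraph_def)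
    qed
  qed
  show ?thesis unfolding digraph_iso_def m_def[symmetric]
    using inj img arcs by (auto simp: bij_betw_def line_digraph_def)
qed

end
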